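(* Let $A$ be a T-brace whose additive group is torsion-free. If $A$ is Smoktunowicz-nilpotent, then $A$ is abelian (i.e. $a\star b=0$ for all $a,b\in A$).
   Context: A (left) brace is a set $A$ with two operations $+$ and $\cdot$ such that $(A,+)$ is an abelian group, $(A,\cdot)$ is a group, and $a(b+c)=ab+ac-a$ for all $a,b,c\in A$. Put $a\star b=ab-a-b$. For subsets $K,L$, $K\star L$ denotes the subgroup of $(A,+)$ generated by all $x\star y$ with $x\in K,y\in L$. A subbrace is a subset which is a subgroup of both $(A,+)$ and $(A,\cdot)$; a subbrace $L$ is an ideal if $a\star z, z\star a\in L$ for all $a\in A$, $z\in L$. $A$ is a T-brace if whenever $I$ is an ideal of $J$ and $J$ is an ideal of $A$, then $I$ is an ideal of $A$. Define $A^{(1)}=A$, $A^{(n+1)}=A^{(n)}\star A$ and $A^1=A$, $A^{n+1}=A\star A^n$. $A$ is Smoktunowicz-nilpotent if $A^{(n)}=0$ and $A^k=0$ for some natural numbers $n,k$. *)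

theory Defs
  imports "HOL-Algebra.Algebra"
begin

definition brace :: "('a, 'm) ring_scheme \<Rightarrow> bool" where
  "brace R \<longleftrightarrow> comm_group (add_monoid R) \<and> group R \<and>
     (\<forall>a\<in>carrier R. \<forall>b\<in>carrier R. \<forall>c\<in>carrier R.
        a \<otimes>\<^bsub>R\<^esub> (b \<oplus>\<^bsub>R\<^esub> c) = (a \<otimes>\<^bsub>R\<^esub> b \<oplus>\<^bsub>R\<^esub> a \<otimes>\<^bsub>R\<^esub> c) \<ominus>\<^bsub>R\<^esub> a)"

definition bstar :: "('a, 'm) ring_scheme \<Rightarrow> 'a \<Rightarrow> 'a \<Rightarrow> 'a" where
  "bstar R a b = (a \<otimes>\<^bsub>R\<^esub> b \<ominus>\<^bsub>R\<^esub> a) \<ominus>\<^bsub>R\<^esub> b"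

definition bstar_set :: "('a, 'm) ring_scheme \<Rightarrow> 'a set \<Rightarrow> 'a set \<Rightarrow> 'a set" where
  "bstar_set R K L = generate (add_monoid R) {bstar R x y | x y. x \<in> K \<and> y \<in> L}"

definition subbrace :: "('a, 'm) ring_scheme \<Rightarrow> 'a set \<Rightarrow> bool" where
  "subbrace R L \<longleftrightarrow> subgroup L (add_monoid R) \<and> subgroup L R"

definition brace_ideal_in :: "('a, 'm) ring_scheme \<Rightarrow> 'a set \<Rightarrow> 'a set \<Rightarrow> bool" where
  "brace_ideal_in R J I \<longleftrightarrow> I \<subseteq> J \<and> subbrace R I \<and>
     (\<forall>a\<in>J. \<forall>z\<in>I. bstar R a z \<in> I \<and> bstar R z a \<in> I)"

definition brace_ideal :: "('a, 'm) ring_scheme \<Rightarrow> 'a set \<Rightarrow> bool" where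
  "brace_ideal R I \<longleftrightarrow> brace_ideal_in R (carrier R) I"

definition T_brace :: "('a, 'm) ring_scheme \<Rightarrow> bool" where
  "T_brace R \<longleftrightarrow> brace R \<and>
     (\<forall>I J. brace_ideal R J \<and> brace_ideal_in R J I \<longrightarrow> brace_ideal R I)"

text \<open>A^(1) = A, A^(n+1) = A^(n) \<star> A  (index 0 also set to A, unused).\<close>
fun right_series :: "('a, 'm) ring_scheme \<Rightarrow> nat \<Rightarrow> 'a set" where
  "right_series R 0 = carrier R"
| "right_series R (Suc 0) = carrier R"
| "right_series R (Suc (Suc n)) = bstar_set R (right_series R (Suc n)) (carrier R)"

text \<open>A^1 = A, A^(n+1) = A \<star> A^n  (index 0 also set to A, unused).\<close>
fun left_series :: "('a, 'm) ring_scheme \<Rightarrow> nat \<Rightarrow> 'a set" where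
  "left_series R 0 = carrier R"
| "left_series R (Suc 0) = carrier R"
| "left_series R (Suc (Suc n)) = bstar_set R (carrier R) (left_series R (Suc n))"

definition smoktunowicz_nilpotent :: "('a, 'm) ring_scheme \<Rightarrow> bool" where
  "smoktunowicz_nilpotent R \<longleftrightarrow>
     (\<exists>n k. n \<ge> 1 \<and> k \<ge> 1 \<and> right_series R n = {\<zero>\<^bsub>R\<^esub>} \<and> left_series R k = {\<zero>\<^bsub>R\<^esub>})"

definition add_torsion_free :: "('a, 'm) ring_scheme \<Rightarrow> bool" where
  "add_torsion_free R \<longleftrightarrow>
     (\<forall>a\<in>carrier R. \<forall>n::nat. n > 0 \<and> [n] \<cdot>\<^bsub>R\<^esub> a = \<zero>\<^bsub>R\<^esub> \<longrightarrow> a = \<zero>\<^bsub>R\<^esub>)"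

end

theory Submission
  imports Defs
begin

locale brc = abelian_group R + group R for R :: "('a,'m) ring_scheme" (structure) +
  assumes ldist: "\<lbrakk>a \<in> carrier R; b \<in> carrier R; c \<in> carrier R\<rbrakk> \<Longrightarrow>
     a \<otimes> (b \<oplus> c) = (a \<otimes> b \<oplus> a \<otimes> c) \<ominus> a"
begin

definition lam where "lam a u = a \<otimes> u \<ominus> a"

lemma lam_closed[simp]: "a \<in> carrier R \<Longrightarrow> u \<in> carrier R \<Longrightarrow> lam a u \<in> carrier R"
  by (simp add: lam_def)

lemma lam_add: assumes "a \<in> carrier R" "u \<in> carrier R" "v \<in> carrier R"
  shows "lam a (u \<oplus> v) = lam a u \<oplus> lam a v"
  using assms unfolding lam_def ldist[OF assms]
  by (simp add: a_minus_def a_ac minus_add)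

lemma one_zero: "\<one> = \<zero>"
proof -
  have "\<one> \<otimes> (\<zero> \<oplus> \<zero>) = (\<one> \<otimes> \<zero> \<oplus> \<one> \<otimes> \<zero>) \<ominus> \<one>" by (rule ldist) auto
  hence "\<zero> = \<zero> \<oplus> \<zero> \<ominus> \<one>" by simp
  hence "\<ominus> \<one> = \<zero>" by (simp add: a_minus_def)
  hence "\<ominus> (\<ominus> \<one>) = \<ominus> \<zero>" by (simp only:)
  thus ?thesis using minus_equality[of \<zero> \<zero>] by simp
qed

lemma lam_zero[simp]: "a \<in> carrier R \<Longrightarrow> lam a \<zero> = \<zero>"
  using lam_add[of a \<zero> \<zero>] by simp

lemma lam_neg: assumes "a \<in> carrier R" "u \<in> carrier R"
  shows "lam a (\<ominus> u) = \<ominus> lam a u"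
proof -
  have "lam a u \<oplus> lam a (\<ominus> u) = \<zero>"
    using lam_add[of a u "\<ominus> u"] assms by (simp add: r_neg)
  thus ?thesis using assms by (metis a_inv_closed lam_closed minus_equality a_comm)
qed

lemma lam_minus: assumes "a \<in> carrier R" "u \<in> carrier R" "v \<in> carrier R"
  shows "lam a (u \<ominus> v) = lam a u \<ominus> lam a v"
  using assms by (simp add: a_minus_def lam_add lam_neg)

lemma mult_lam: "a \<in> carrier R \<Longrightarrow> u \<in> carrier R \<Longrightarrow> a \<otimes> u = a \<oplus> lam a u"
  by (simp add: lam_def a_minus_def a_ac r_neg2)

lemma lam_mult: assumes "a \<in> carrier R" "b \<in> carrier R" "u \<in> carrier R"
  shows "lam (a \<otimes> b) u = lam a (lam b u)"
proof -
  have "lam a (lam b u) = lam a (b \<otimes> u) \<ominus> lam a b"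
    using assms by (simp add: lam_def[of b] lam_minus)
  also have "\<dots> = lam (a \<otimes> b) u" using assms
    by (simp add: lam_def m_assoc a_minus_def minus_add a_ac r_neg2 minus_minus)
  finally show ?thesis by simp
qed

lemma neg_zero[simp]: "\<ominus> \<zero> = \<zero>"
  using minus_equality[of \<zero> \<zero>] by simp

lemma lam_one: "u \<in> carrier R \<Longrightarrow> lam \<zero> u = u"
proof -
  assume u: "u \<in> carrier R"
  have "\<zero> \<otimes> u = u" using l_one[OF u] unfolding one_zero .
  thus ?thesis unfolding lam_def a_minus_def neg_zero using u by (simp only: r_zero)
qed

abbreviation st where "st a b \<equiv> bstar R a b"

lemma st_lam: "a \<in> carrier R \<Longrightarrow> b \<in> carrier R \<Longrightarrow> st a b = lam a b \<ominus> b"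
  by (simp add: bstar_def lam_def)

lemma st_closed[simp]: "a \<in> carrier R \<Longrightarrow> b \<in> carrier R \<Longrightarrow> st a b \<in> carrier R"
  by (simp add: bstar_def)

lemma mult_st: "a \<in> carrier R \<Longrightarrow> b \<in> carrier R \<Longrightarrow> a \<otimes> b = a \<oplus> b \<oplus> st a b"
  by (simp add: bstar_def a_minus_def a_ac r_neg2 minus_add)

lemma st_add_r: assumes "a \<in> carrier R" "u \<in> carrier R" "v \<in> carrier R"
  shows "st a (u \<oplus> v) = st a u \<oplus> st a v"
  using assms by (simp add: st_lam lam_add a_minus_def a_ac minus_add)

lemma st_zero_r[simp]: "a \<in> carrier R \<Longrightarrow> st a \<zero> = \<zero>"
  by (simp add: st_lam a_minus_def)

lemma st_zero_l[simp]: "a \<in> carrier R \<Longrightarrow> st \<zero> a = \<zero>"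
  by (simp add: st_lam lam_one a_minus_def r_neg)

lemma st_neg_r: assumes "a \<in> carrier R" "u \<in> carrier R"
  shows "st a (\<ominus> u) = \<ominus> st a u"
  using assms by (simp add: st_lam lam_neg a_minus_def minus_add)

lemma st_mult_l: assumes "a \<in> carrier R" "b \<in> carrier R" "c \<in> carrier R"
  shows "st (a \<otimes> b) c = st a (st b c) \<oplus> st a c \<oplus> st b c"
  using assms by (simp add: st_lam lam_mult lam_minus lam_add lam_neg a_minus_def a_ac minus_add r_neg2 minus_minus)

definition ZZ where "ZZ = {z \<in> carrier R. \<forall>a\<in>carrier R. st a z = \<zero> \<and> st z a = \<zero>}"

lemma ZZ_carrier: "z \<in> ZZ \<Longrightarrow> z \<in> carrier R" by (simp add: ZZ_def)
lemma ZZ_l: "z \<in> ZZ \<Longrightarrow> a \<in> carrier R \<Longrightarrow> st a z = \<zero>" by (simp add: ZZ_def)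
lemma ZZ_r: "z \<in> ZZ \<Longrightarrow> a \<in> carrier R \<Longrightarrow> st z a = \<zero>" by (simp add: ZZ_def)

lemma ZZ_mult_st: assumes "z \<in> ZZ" "p \<in> carrier R" "a \<in> carrier R"
  shows "st (p \<otimes> z) a = st p a"
proof -
  have z: "z \<in> carrier R" using assms ZZ_carrier by auto
  show ?thesis using st_mult_l[OF assms(2) z assms(3)] ZZ_r[OF assms(1) assms(3)] assms z by simp
qed

lemma ZZ_add_mult: assumes "z \<in> ZZ" "p \<in> carrier R"
  shows "p \<oplus> z = p \<otimes> z"
  using mult_st[OF assms(2) ZZ_carrier[OF assms(1)]] ZZ_l[OF assms(1,2)] assms ZZ_carrier by simp

lemma ZZ_zero: "\<zero> \<in> ZZ" by (simp add: ZZ_def)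

lemma ZZ_neg: assumes "z \<in> ZZ" shows "\<ominus> z \<in> ZZ"
proof -
  have z: "z \<in> carrier R" using assms ZZ_carrier by auto
  have m: "z \<otimes> \<ominus> z = \<zero>"
    using mult_st[of z "\<ominus> z"] ZZ_l[OF assms, of z] z ZZ_r[OF assms] by (simp add: r_neg)
  { fix a assume a: "a \<in> carrier R"
    have "\<zero> = st (z \<otimes> \<ominus> z) a" using m a by simp
    also have "\<dots> = st (\<ominus> z) a" using st_mult_l[of z "\<ominus> z" a] a z ZZ_r[OF assms] by simp
    finally have "st (\<ominus> z) a = \<zero>" by simp
    moreover have "st a (\<ominus> z) = \<zero>" using st_neg_r[OF a z] ZZ_l[OF assms a] by simp
    ultimately have "st (\<ominus> z) a = \<zero> \<and> st a (\<ominus> z) = \<zero>" by simp }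
  thus ?thesis using z by (simp add: ZZ_def)
qed

lemma ZZ_add: assumes "z \<in> ZZ" "w \<in> ZZ" shows "z \<oplus> w \<in> ZZ"
proof -
  have z: "z \<in> carrier R" "w \<in> carrier R" using assms ZZ_carrier by auto
  { fix a assume a: "a \<in> carrier R"
    have "st (z \<oplus> w) a = st (z \<otimes> w) a" using ZZ_add_mult[OF assms(2) z(1)] by simp
    also have "\<dots> = \<zero>" using st_mult_l[of z w a] a z ZZ_r[OF assms(1)] ZZ_r[OF assms(2)] by simp
    finally have "st (z \<oplus> w) a = \<zero>" .
    moreover have "st a (z \<oplus> w) = \<zero>" using st_add_r[OF a z] ZZ_l[OF assms(1) a] ZZ_l[OF assms(2) a] by simp
    ultimately have "st (z \<oplus> w) a = \<zero> \<and> st a (z \<oplus> w) = \<zero>" by simp }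
  thus ?thesis using z by (simp add: ZZ_def)
qed

lemma ZZ_subgroup: "subgroup ZZ (add_monoid R)"
  by (rule subgroup.intro) (auto simp: ZZ_def[symmetric] ZZ_add ZZ_neg ZZ_zero intro: ZZ_carrier simp flip: a_inv_def)

lemma bilin: assumes "u \<in> carrier R" "v \<in> carrier R" "a \<in> carrier R"
  and "st u v \<in> ZZ" "st v a \<in> ZZ"
  shows "st (u \<oplus> v) a = st u a \<oplus> st v a"
proof -
  define w where "w = \<ominus> st u v"
  have w: "w \<in> ZZ" using ZZ_neg assms w_def by simp
  have "u \<oplus> v = (u \<otimes> v) \<oplus> w" using assms mult_st[of u v]
    by (simp add: w_def a_assoc r_neg)
  also have "\<dots> = (u \<otimes> v) \<otimes> w" using ZZ_add_mult[OF w] assms by simp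
  finally have "st (u \<oplus> v) a = st (u \<otimes> v) a" using ZZ_mult_st[OF w, of "u \<otimes> v" a] assms by simp
  also have "\<dots> = st u a \<oplus> st v a" using st_mult_l[of u v a] assms ZZ_l[OF assms(5), of u] by simp
  finally show ?thesis .
qed

lemma st_neg_l: assumes y: "y \<in> carrier R" and yr: "\<And>b. b \<in> carrier R \<Longrightarrow> st y b \<in> ZZ"
  and a: "a \<in> carrier R"
  shows "st (\<ominus> y) a = \<ominus> st y a"
proof -
  have iy: "inv y \<in> carrier R" using y by simp
  define s where "s = st y (inv y)"
  have s: "s \<in> ZZ" using yr[OF iy] s_def by simp
  have sc: "s \<in> carrier R" using s ZZ_carrier by simp
  have "\<zero> = y \<oplus> inv y \<oplus> s" using mult_st[OF y iy] y one_zero s_def by simp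
  hence "(inv y \<oplus> s) \<oplus> y = \<zero>" using y iy sc by (simp add: a_ac)
  hence "\<ominus> y = inv y \<oplus> s" using y iy sc by (intro minus_equality) auto
  also have "\<dots> = inv y \<otimes> s" using ZZ_add_mult[OF s iy] .
  finally have e1: "st (\<ominus> y) a = st (inv y) a" using ZZ_mult_st[OF s iy a] by simp
  define t where "t = st (inv y) a"
  have tc: "t \<in> carrier R" using t_def iy a by simp
  have "\<zero> = st (y \<otimes> inv y) a" using y a one_zero by simp
  also have "\<dots> = st y t \<oplus> st y a \<oplus> t" using st_mult_l[OF y iy a] t_def by simp
  finally have e2: "\<zero> = st y t \<oplus> st y a \<oplus> t" .
  hence "t \<oplus> (st y t \<oplus> st y a) = \<zero>" using tc y a by (simp add: a_ac)
  hence "\<ominus> (st y t \<oplus> st y a) = t" using tc y a by (intro minus_equality) auto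
  hence "t = \<ominus> (st y t \<oplus> st y a)" by simp
  hence "t \<in> ZZ" using ZZ_neg[OF ZZ_add[OF yr[OF tc] yr[OF a]]] by simp
  hence "st y t = \<zero>" using ZZ_l y by simp
  hence "\<zero> = \<zero> \<oplus> st y a \<oplus> t" using e2 by simp
  hence "\<zero> = st y a \<oplus> t" using y a tc by (simp only: l_zero st_closed)
  hence "t \<oplus> st y a = \<zero>" using tc y a by (simp add: a_ac)
  hence "\<ominus> st y a = t" using tc y a by (intro minus_equality) auto
  hence "t = \<ominus> st y a" by simp
  thus ?thesis using e1 t_def by simp
qed

definition MM where "MM = {y \<in> carrier R. \<forall>a\<in>carrier R. st y a \<in> ZZ \<and> st a y \<in> ZZ}"

lemma MM_carrier: "y \<in> MM \<Longrightarrow> y \<in> carrier R" by (simp add: MM_def)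
lemma MM_l: "y \<in> MM \<Longrightarrow> a \<in> carrier R \<Longrightarrow> st a y \<in> ZZ" by (simp add: MM_def)
lemma MM_r: "y \<in> MM \<Longrightarrow> a \<in> carrier R \<Longrightarrow> st y a \<in> ZZ" by (simp add: MM_def)

lemma ZZ_MM: "z \<in> ZZ \<Longrightarrow> z \<in> MM"
  by (simp add: MM_def ZZ_carrier ZZ_l ZZ_r ZZ_zero)

lemma MM_add: assumes "u \<in> MM" "v \<in> MM" "a \<in> carrier R"
  shows "st (u \<oplus> v) a = st u a \<oplus> st v a"
  using bilin[of u v a] assms MM_carrier MM_l MM_r by simp

lemma MM_add_closed: assumes "u \<in> MM" "v \<in> MM" shows "u \<oplus> v \<in> MM"
proof -
  have c: "u \<in> carrier R" "v \<in> carrier R" using assms MM_carrier by auto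
  { fix a assume a: "a \<in> carrier R"
    have "st (u \<oplus> v) a \<in> ZZ" using MM_add[OF assms a] ZZ_add[OF MM_r[OF assms(1) a] MM_r[OF assms(2) a]] by simp
    moreover have "st a (u \<oplus> v) \<in> ZZ" using st_add_r[OF a c] ZZ_add[OF MM_l[OF assms(1) a] MM_l[OF assms(2) a]] by simp
    ultimately have "st (u \<oplus> v) a \<in> ZZ \<and> st a (u \<oplus> v) \<in> ZZ" by simp }
  thus ?thesis using c unfolding MM_def by simp
qed

lemma MM_neg: assumes "u \<in> MM" "a \<in> carrier R"
  shows "st (\<ominus> u) a = \<ominus> st u a"
  using st_neg_l[of u a] assms MM_carrier MM_r by simp

lemma MM_neg_closed: assumes "u \<in> MM" shows "\<ominus> u \<in> MM"
proof -
  have c: "u \<in> carrier R" using assms MM_carrier by auto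
  { fix a assume a: "a \<in> carrier R"
    have "st (\<ominus> u) a \<in> ZZ" using MM_neg[OF assms a] ZZ_neg[OF MM_r[OF assms(1) a]] by simp
    moreover have "st a (\<ominus> u) \<in> ZZ" using st_neg_r[OF a c] ZZ_neg[OF MM_l[OF assms(1) a]] by simp
    ultimately have "st (\<ominus> u) a \<in> ZZ \<and> st a (\<ominus> u) \<in> ZZ" by simp }
  thus ?thesis using c unfolding MM_def by simp
qed

lemma st_pow_r_nat: assumes "a \<in> carrier R" "y \<in> carrier R"
  shows "st a (add_pow R (n::nat) y) = add_pow R n (st a y)"
  by (induction n) (auto simp: assms st_add_r)

lemma st_pow_r: assumes "a \<in> carrier R" "y \<in> carrier R"
  shows "st a (add_pow R (n::int) y) = add_pow R n (st a y)"
proof (cases "n \<ge> 0")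
  case True thus ?thesis using st_pow_r_nat[OF assms, of "nat n"] add_pow_int_ge[OF True, of R y] add_pow_int_ge[OF True, of R "st a y"] by simp
next
  case False
  hence n: "n < 0" by simp
  show ?thesis using st_pow_r_nat[OF assms, of "nat (-n)"] add_pow_int_lt[OF n, of R y] add_pow_int_lt[OF n, of R "st a y"] add_pow_int_lt[OF n, of R "st y a"]
    st_neg_r[OF assms(1) add.nat_pow_closed[OF assms(2)]] by simp
qed

lemma MM_pow_nat: assumes "y \<in> MM" "a \<in> carrier R"
  shows "add_pow R (n::nat) y \<in> MM \<and> st (add_pow R n y) a = add_pow R n (st y a)"
proof (induction n)
  case 0
  then show ?case using assms ZZ_MM ZZ_zero by simp
next
  case (Suc n)
  then show ?case using MM_add_closed MM_add assms by simp
qed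

lemma MM_pow: assumes "y \<in> MM" "a \<in> carrier R"
  shows "add_pow R (n::int) y \<in> MM \<and> st (add_pow R n y) a = add_pow R n (st y a)"
proof (cases "n \<ge> 0")
  case True thus ?thesis using MM_pow_nat[OF assms, of "nat n"] add_pow_int_ge[OF True, of R y] add_pow_int_ge[OF True, of R "st y a"] by simp
next
  case False
  hence n: "n < 0" by simp
  have "add_pow R (nat (-n)) y \<in> MM" using MM_pow_nat[OF assms] by simp
  thus ?thesis using MM_pow_nat[OF assms, of "nat (-n)"] add_pow_int_lt[OF n, of R y] add_pow_int_lt[OF n, of R "st a y"] add_pow_int_lt[OF n, of R "st y a"] 
    MM_neg[OF _ assms(2)] MM_neg_closed by simp
qed

lemma ZZ_pow: "z \<in> ZZ \<Longrightarrow> add_pow R (k::int) z \<in> ZZ"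
  using add.subgroup_int_pow_closed[OF ZZ_subgroup] by simp

lemma pow_int0[simp]: "add_pow R (0::int) y = \<zero>"
  using add_pow_int_ge[of 0 R y] by simp

lemma subbraceI:
  assumes sg: "subgroup S (add_monoid R)"
    and st1: "\<And>u v. u \<in> S \<Longrightarrow> v \<in> S \<Longrightarrow> st u v \<in> S"
    and st2: "\<And>u. u \<in> S \<Longrightarrow> st u (inv u) \<in> S"
  shows "subbrace R S"
proof -
  have sub: "S \<subseteq> carrier R" using subgroup.subset[OF sg] by simp
  have ad: "\<And>u v. u \<in> S \<Longrightarrow> v \<in> S \<Longrightarrow> u \<oplus> v \<in> S"
    using subgroup.m_closed[OF sg] by simp
  have ng: "\<And>u. u \<in> S \<Longrightarrow> \<ominus> u \<in> S"
    using subgroup.m_inv_closed[OF sg] by (simp add: a_inv_def)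
  have zr: "\<zero> \<in> S" using subgroup.one_closed[OF sg] by simp
  have "subgroup S R"
  proof (rule subgroup.intro)
    show "S \<subseteq> carrier R" by (rule sub)
    show "\<And>u v. u \<in> S \<Longrightarrow> v \<in> S \<Longrightarrow> u \<otimes> v \<in> S"
      using mult_st sub ad st1 by (metis subsetD)
    show "\<one> \<in> S" using zr one_zero by simp
    fix u assume u: "u \<in> S"
    have uc: "u \<in> carrier R" using u sub by auto
    have iu: "inv u \<in> carrier R" using uc by simp
    have "\<zero> = u \<oplus> inv u \<oplus> st u (inv u)" using mult_st[OF uc iu] uc one_zero by simp
    hence "inv u = \<ominus> (u \<oplus> st u (inv u))" using uc iu
      by (simp add: a_ac minus_equality[symmetric])
    thus "inv u \<in> S" using ng[OF ad[OF u st2[OF u]]] by simp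
  qed
  thus ?thesis using sg by (simp add: subbrace_def)
qed

definition sp where "sp x W = {add_pow R (2 * (n::int)) x \<oplus> w | n w. w \<in> W}"

lemma sp_subgroup:
  assumes x: "x \<in> carrier R" and sg: "subgroup W (add_monoid R)"
  shows "subgroup (sp x W) (add_monoid R)"
proof -
  have sub: "W \<subseteq> carrier R" using subgroup.subset[OF sg] by simp
  have ad: "\<And>u v. u \<in> W \<Longrightarrow> v \<in> W \<Longrightarrow> u \<oplus> v \<in> W"
    using subgroup.m_closed[OF sg] by simp
  have ng: "\<And>u. u \<in> W \<Longrightarrow> \<ominus> u \<in> W"
    using subgroup.m_inv_closed[OF sg] by (simp add: a_inv_def)
  have zr: "\<zero> \<in> W" using subgroup.one_closed[OF sg] by simp
  show ?thesis
  proof (rule subgroup.intro)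
    show "sp x W \<subseteq> carrier (add_monoid R)" using x sub by (auto simp: sp_def)
    show "\<one>\<^bsub>add_monoid R\<^esub> \<in> sp x W" unfolding sp_def
      using zr x by (auto intro!: exI[of _ 0] exI[of _ \<zero>])
  next
    fix u v assume "u \<in> sp x W" "v \<in> sp x W"
    then obtain n w m w' where u: "u = add_pow R (2 * (n::int)) x \<oplus> w" "w \<in> W"
      and v: "v = add_pow R (2 * (m::int)) x \<oplus> w'" "w' \<in> W" unfolding sp_def by auto
    have wc: "w \<in> carrier R" "w' \<in> carrier R" using u v sub by auto
    have "u \<oplus> v = add_pow R (2 * n + 2 * m) x \<oplus> (w \<oplus> w')"
      using u v wc x by (simp add: add.int_pow_mult a_ac)
    also have "\<dots> = add_pow R (2 * (n + m)) x \<oplus> (w \<oplus> w')" by (simp add: algebra_simps)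
    finally have "u \<oplus> v = add_pow R (2 * (n + m)) x \<oplus> (w \<oplus> w')" .
    moreover have "w \<oplus> w' \<in> W" using ad u v by simp
    ultimately show "u \<otimes>\<^bsub>add_monoid R\<^esub> v \<in> sp x W" unfolding sp_def by (simp only: monoid.simps) blast
  next
    fix u assume "u \<in> sp x W"
    then obtain n w where u: "u = add_pow R (2 * (n::int)) x \<oplus> w" "w \<in> W"
      unfolding sp_def by auto
    have wc: "w \<in> carrier R" using u sub by auto
    have "\<ominus> u = add_pow R (- (2 * n)) x \<oplus> \<ominus> w"
      using u wc x by (simp add: add.int_pow_neg minus_add)
    also have "\<dots> = add_pow R (2 * (- n)) x \<oplus> \<ominus> w" by simp
    finally have "\<ominus> u = add_pow R (2 * (- n)) x \<oplus> \<ominus> w" .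
    moreover have "\<ominus> w \<in> W" using ng u by simp
    ultimately have "\<ominus> u \<in> sp x W" unfolding sp_def by blast
    thus "inv\<^bsub>add_monoid R\<^esub> u \<in> sp x W" by (simp add: a_inv_def)
  qed
qed

lemma solve_add: assumes "a \<in> carrier R" "b \<in> carrier R" "a \<oplus> b = t"
  shows "a = t \<oplus> \<ominus> b"
  using assms by (auto simp: a_assoc r_neg)

lemma W4_subgroup: assumes c: "c \<in> carrier R"
  shows "subgroup {add_pow R (4 * (m::int)) c | m. True} (add_monoid R)"
proof (rule subgroup.intro)
  show "{add_pow R (4 * (m::int)) c | m. True} \<subseteq> carrier (add_monoid R)" using c by auto
  have "\<zero> = add_pow R (4 * (0::int)) c" by simp
  thus "\<one>\<^bsub>add_monoid R\<^esub> \<in> {add_pow R (4 * (m::int)) c | m. True}" by (simp only: monoid.simps) blast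
next
  fix u v assume "u \<in> {add_pow R (4 * (m::int)) c | m. True}" "v \<in> {add_pow R (4 * (m::int)) c | m. True}"
  then obtain m m' where u: "u = add_pow R (4 * (m::int)) c" and v: "v = add_pow R (4 * (m'::int)) c" by auto
  have "u \<oplus> v = add_pow R (4 * m + 4 * m') c" using u v c by (simp add: add.int_pow_mult)
  also have "\<dots> = add_pow R (4 * (m + m')) c" by (simp add: algebra_simps)
  finally have "u \<oplus> v = add_pow R (4 * (m + m')) c" .
  thus "u \<otimes>\<^bsub>add_monoid R\<^esub> v \<in> {add_pow R (4 * (m::int)) c | m. True}" by (simp only: monoid.simps) blast
next
  fix u assume "u \<in> {add_pow R (4 * (m::int)) c | m. True}"
  then obtain m where u: "u = add_pow R (4 * (m::int)) c" by auto
  have "\<ominus> u = add_pow R (- (4 * m)) c" using u c by (simp add: add.int_pow_neg)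
  also have "\<dots> = add_pow R (4 * (- m)) c" by simp
  finally have "\<ominus> u = add_pow R (4 * (- m)) c" .
  hence "\<ominus> u \<in> {add_pow R (4 * (m::int)) c | m. True}" by blast
  thus "inv\<^bsub>add_monoid R\<^esub> u \<in> {add_pow R (4 * (m::int)) c | m. True}" by (simp add: a_inv_def)
qed

lemma prodf: assumes x: "x \<in> MM" and z: "z \<in> ZZ" "z' \<in> ZZ"
  shows "st (add_pow R (n::int) x \<oplus> z) (add_pow R (p::int) x \<oplus> z') = add_pow R (n * p) (st x x)"
proof -
  have xc: "x \<in> carrier R" using x MM_carrier by simp
  have zc: "z \<in> carrier R" "z' \<in> carrier R" using z ZZ_carrier by auto
  have nx: "add_pow R n x \<in> MM" using MM_pow[OF x xc] by simp
  define u where "u = add_pow R n x \<oplus> z"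
  have uc: "u \<in> carrier R" using u_def xc zc by simp
  have "st u (add_pow R p x \<oplus> z') = st u (add_pow R p x)"
    using st_add_r[OF uc add.int_pow_closed[OF xc] zc(2)] xc ZZ_l[OF z(2) uc] uc add.int_pow_closed[OF xc, of p] by simp
  also have "\<dots> = add_pow R p (st u x)" using st_pow_r[OF uc xc] .
  also have "st u x = st (add_pow R n x) x \<oplus> st z x"
    unfolding u_def using MM_add[OF nx ZZ_MM[OF z(1)] xc] .
  also have "\<dots> = add_pow R n (st x x)" using MM_pow[OF x xc] ZZ_r[OF z(1) xc] xc by simp
  also have "add_pow R p (add_pow R n (st x x)) = add_pow R (n * p) (st x x)"
    using add.int_pow_pow xc by simp
  finally show ?thesis unfolding u_def .
qed


lemma lam_st: "a \<in> carrier R \<Longrightarrow> b \<in> carrier R \<Longrightarrow> lam a b = st a b \<oplus> b"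
  by (simp add: st_lam a_minus_def a_assoc l_neg)

lemma normal_from:
  assumes sg: "subgroup S (add_monoid R)"
    and cl1: "\<And>a y. a \<in> carrier R \<Longrightarrow> y \<in> S \<Longrightarrow> st a y \<in> S"
    and cl2: "\<And>a y. a \<in> carrier R \<Longrightarrow> y \<in> S \<Longrightarrow> st y a \<in> S"
    and a: "a \<in> carrier R" and y: "y \<in> S"
  shows "a \<otimes> y \<otimes> inv a \<in> S"
proof -
  have sub: "S \<subseteq> carrier R" using subgroup.subset[OF sg] by simp
  have ad: "\<And>u v. u \<in> S \<Longrightarrow> v \<in> S \<Longrightarrow> u \<oplus> v \<in> S"
    using subgroup.m_closed[OF sg] by simp
  have C: "\<exists>v\<in>S. u \<otimes> b = b \<otimes> v" if u: "u \<in> S" and b: "b \<in> carrier R" for u b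
  proof -
    have uc: "u \<in> carrier R" using u sub by auto
    define t where "t = u \<oplus> st u b"
    have tS: "t \<in> S" using ad[OF u cl2[OF b u]] t_def by simp
    have tc: "t \<in> carrier R" using tS sub by auto
    define v where "v = lam (inv b) t"
    have vS: "v \<in> S" unfolding v_def using lam_st[of "inv b" t] b tc ad[OF cl1[OF _ tS] tS] by simp
    have "u \<otimes> b = b \<oplus> t" using mult_st[OF uc b] uc b by (simp add: t_def a_ac)
    also have "t = lam b v" unfolding v_def using lam_mult[of b "inv b" t] b tc lam_one one_zero by simp
    also have "b \<oplus> lam b v = b \<otimes> v" using mult_lam[of b v] b vS sub by auto
    finally show ?thesis using vS by blast
  qed
  obtain v where v: "v \<in> S" "y \<otimes> inv a = inv a \<otimes> v" using C[OF y inv_closed[OF a]] by blast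
  have "a \<otimes> y \<otimes> inv a = a \<otimes> (inv a \<otimes> v)" using v a y sub by (simp add: m_assoc subsetD)
  also have "\<dots> = v" using a v sub by (simp add: m_assoc[symmetric] subsetD)
  finally show ?thesis using v by simp
qed

definition goodS where "goodS S \<longleftrightarrow> subgroup S (add_monoid R) \<and>
   (\<forall>a\<in>carrier R. \<forall>y\<in>S. st a y \<in> S \<and> st y a \<in> S \<and> a \<otimes> y \<otimes> inv a \<in> S)"

lemma good_carrier: "goodS (carrier R)"
  unfolding goodS_def using add.subgroup_self by simp

lemma good_step: assumes g: "goodS S" shows "goodS (bstar_set R S (carrier R))"
proof -
  have sg: "subgroup S (add_monoid R)" using g goodS_def by simp
  have sub: "S \<subseteq> carrier R" using subgroup.subset[OF sg] by simp
  define G where "G = {st x y | x y. x \<in> S \<and> y \<in> carrier R}"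
  have GS: "G \<subseteq> S" using g unfolding goodS_def G_def by blast
  have GC: "G \<subseteq> carrier R" using GS sub by blast
  define S' where "S' = generate (add_monoid R) G"
  have eq: "bstar_set R S (carrier R) = S'" unfolding S'_def G_def bstar_set_def by simp
  have sg': "subgroup S' (add_monoid R)" unfolding S'_def using add.generate_is_subgroup[OF GC] by simp
  have S'S: "S' \<subseteq> S" unfolding S'_def using add.generate_subgroup_incl[OF GS sg] by simp
  have S'C: "S' \<subseteq> carrier R" using S'S sub by blast
  have cl2: "st y a \<in> S'" if "a \<in> carrier R" "y \<in> S'" for a y
    unfolding S'_def G_def using that S'S by (auto intro: generate.incl)
  have gen: "st a g \<in> S'" if a: "a \<in> carrier R" and gG: "g \<in> G" for a g
  proof -
    obtain x b where gx: "g = st x b" "x \<in> S" "b \<in> carrier R" using gG G_def by blast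
    have xc: "x \<in> carrier R" using gx sub by auto
    define x' where "x' = a \<otimes> x \<otimes> inv a"
    have x'S: "x' \<in> S" using g gx a unfolding goodS_def x'_def by blast
    have x'c: "x' \<in> carrier R" using x'S sub by auto
    have ax: "a \<otimes> x = x' \<otimes> a" unfolding x'_def using a xc by (simp add: m_assoc)
    have "st a (st x b) \<oplus> st a b \<oplus> st x b = st (a \<otimes> x) b" using st_mult_l[OF a xc gx(3)] by simp
    also have "\<dots> = st x' (st a b) \<oplus> st x' b \<oplus> st a b" unfolding ax using st_mult_l[OF x'c a gx(3)] by simp
    finally have "(st a (st x b) \<oplus> st x b) \<oplus> st a b = (st x' (st a b) \<oplus> st x' b) \<oplus> st a b"
      using a xc x'c gx(3) by (simp add: a_ac)
    hence "st a (st x b) \<oplus> st x b = st x' (st a b) \<oplus> st x' b"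
      using a xc x'c gx(3) by simp
    hence e: "st a (st x b) = (st x' (st a b) \<oplus> st x' b) \<oplus> \<ominus> st x b"
      using solve_add a xc gx(3) by simp
    have abc: "st a b \<in> carrier R" using a gx(3) by simp
    have g1: "st x' (st a b) \<in> S'" unfolding S'_def G_def using x'S abc
      by (intro generate.incl) blast
    have g2: "st x' b \<in> S'" unfolding S'_def G_def using x'S a gx(3)
      by (intro generate.incl) auto
    have g3: "\<ominus> st x b \<in> S'" unfolding S'_def G_def a_inv_def using gx
      by (intro generate.inv) auto
    have "st a g = (st x' (st a b) \<oplus> st x' b) \<oplus> \<ominus> st x b" using e gx by simp
    also have "\<dots> \<in> S'" using subgroup.m_closed[OF sg'] g1 g2 g3 by simp
    finally show ?thesis .
  qed
  have cl1: "st a y \<in> S'" if a: "a \<in> carrier R" and y: "y \<in> S'" for a y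
    using y unfolding S'_def
  proof (induction rule: generate.induct)
    case one
    then show ?case using a generate.one[of "add_monoid R" G] by simp
  next
    case (incl h)
    then show ?case using gen[OF a] unfolding S'_def by simp
  next
    case (inv h)
    have hc: "h \<in> carrier R" using inv GC by auto
    have "st a h \<in> S'" using gen[OF a inv] .
    hence "\<ominus> st a h \<in> S'" using subgroup.m_inv_closed[OF sg'] by (simp add: a_inv_def)
    thus ?case using st_neg_r[OF a hc] unfolding S'_def by (simp add: a_inv_def)
  next
    case (eng h1 h2)
    have hc: "h1 \<in> carrier R" "h2 \<in> carrier R"
      using eng.hyps add.generate_incl[OF GC] by auto
    thus ?case using st_add_r[OF a hc] subgroup.m_closed[OF sg'] eng.IH unfolding S'_def by simp
  qed
  have nm: "a \<otimes> y \<otimes> inv a \<in> S'" if "a \<in> carrier R" "y \<in> S'" for a y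
    using normal_from[OF sg' cl1 cl2] that by blast
  show ?thesis unfolding eq goodS_def using sg' cl1 cl2 nm by blast
qed

lemma good_rs: "goodS (right_series R n)"
proof -
  have "goodS (right_series R (Suc m))" for m
  proof (induction m)
    case 0 then show ?case using good_carrier by simp
  next
    case (Suc m) then show ?case using good_step by simp
  qed
  thus ?thesis using good_carrier by (cases n) auto
qed

lemma rs_carrier: "right_series R n \<subseteq> carrier R"
  using good_rs[of n] subgroup.subset unfolding goodS_def by force

lemma rs_step: assumes "y \<in> right_series R n" "a \<in> carrier R" shows "st y a \<in> right_series R (Suc n)"
proof (cases n)
  case 0 then show ?thesis using assms rs_carrier by auto
next
  case (Suc m)
  then show ?thesis using assms by (auto simp: bstar_set_def intro: generate.incl)
qed

lemma ls_step: assumes "y \<in> left_series R n" "a \<in> carrier R" "y \<in> carrier R"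
  shows "st a y \<in> left_series R (Suc n)"
proof (cases n)
  case 0 then show ?thesis using assms by auto
next
  case (Suc m)
  then show ?thesis using assms by (auto simp: bstar_set_def intro: generate.incl)
qed

end

locale brcT = brc + assumes tf: "add_torsion_free R" and TT: "T_brace R"
begin

lemma tf_int: assumes x: "x \<in> carrier R" and n: "(n::int) \<noteq> 0" and e: "add_pow R n x = \<zero>"
  shows "x = \<zero>"
proof (cases "n > 0")
  case True
  hence "add_pow R (nat n) x = \<zero>" using e add_pow_int_ge[of n R x] by simp
  moreover have "nat n > 0" using True by simp
  ultimately show ?thesis using tf x unfolding add_torsion_free_def by blast
next
  case False
  hence n': "n < 0" using n by simp
  hence "\<ominus> add_pow R (nat (- n)) x = \<zero>" using e add_pow_int_lt[of n R x] by simp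
  hence "add_pow R (nat (- n)) x = \<zero>" using x
    by (metis add.nat_pow_closed minus_minus neg_zero)
  moreover have "nat (- n) > 0" using n' by simp
  ultimately show ?thesis using tf x unfolding add_torsion_free_def by blast
qed

lemma isolated: assumes x: "x \<in> MM" and n: "(n::int) \<noteq> 0" and z: "add_pow R n x \<in> ZZ"
  shows "x \<in> ZZ"
proof -
  have xc: "x \<in> carrier R" using x MM_carrier by simp
  { fix a assume a: "a \<in> carrier R"
    have "add_pow R n (st a x) = \<zero>" using st_pow_r[OF a xc] ZZ_l[OF z a] by simp
    hence 1: "st a x = \<zero>" using tf_int[OF _ n] a xc by simp
    have "add_pow R n (st x a) = \<zero>" using MM_pow[OF x a] ZZ_r[OF z a] by simp
    hence "st x a = \<zero>" using tf_int[OF _ n] a xc by simp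
    with 1 have "st a x = \<zero> \<and> st x a = \<zero>" by simp }
  thus ?thesis using xc by (simp add: ZZ_def)
qed

lemma key: assumes x: "x \<in> MM" shows "x \<in> ZZ"
proof (rule ccontr)
  assume nx: "x \<notin> ZZ"
  have xc: "x \<in> carrier R" using x MM_carrier by simp
  have iso: "\<And>n. add_pow R (n::int) x \<in> ZZ \<Longrightarrow> n = 0" using isolated[OF x] nx by blast
  define c where "c = st x x"
  have cZ: "c \<in> ZZ" using MM_r[OF x xc] c_def by simp
  have cc: "c \<in> carrier R" using cZ ZZ_carrier by simp
  define W where "W = {add_pow R (4 * (m::int)) c | m. True}"
  have WZ: "W \<subseteq> ZZ" unfolding W_def using ZZ_pow[OF cZ] by auto
  define L where "L = sp x ZZ"
  define I where "I = sp x W"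
  have sgL: "subgroup L (add_monoid R)" unfolding L_def by (rule sp_subgroup[OF xc ZZ_subgroup])
  have sgI: "subgroup I (add_monoid R)" unfolding I_def W_def by (rule sp_subgroup[OF xc W4_subgroup[OF cc]])
  have ZL: "\<And>z. z \<in> ZZ \<Longrightarrow> z \<in> L"
  proof -
    fix z assume z: "z \<in> ZZ"
    have "z = add_pow R (2 * (0::int)) x \<oplus> z" using z ZZ_carrier by simp
    thus "z \<in> L" unfolding L_def sp_def using z by blast
  qed
  have WI: "\<And>w. w \<in> W \<Longrightarrow> w \<in> I"
  proof -
    fix w assume w: "w \<in> W"
    have "w = add_pow R (2 * (0::int)) x \<oplus> w" using w WZ ZZ_carrier by auto
    thus "w \<in> I" unfolding I_def sp_def using w by blast
  qed
  have Lform: "\<And>u. u \<in> L \<Longrightarrow> \<exists>n z. u = add_pow R (2 * (n::int)) x \<oplus> z \<and> z \<in> ZZ"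
    unfolding L_def sp_def by blast
  have IL: "I \<subseteq> L" unfolding I_def L_def sp_def using WZ by blast
  have LM: "\<And>u. u \<in> L \<Longrightarrow> u \<in> MM"
  proof -
    fix u assume "u \<in> L"
    then obtain n z where u: "u = add_pow R (2 * (n::int)) x \<oplus> z" "z \<in> ZZ" using Lform by blast
    show "u \<in> MM" unfolding u(1) using MM_add_closed MM_pow[OF x xc] ZZ_MM[OF u(2)] by simp
  qed
  have LC: "L \<subseteq> carrier R" using LM MM_carrier by blast
  have stI: "\<And>u v. u \<in> L \<Longrightarrow> v \<in> L \<Longrightarrow> st u v \<in> I"
  proof -
    fix u v assume "u \<in> L" "v \<in> L"
    then obtain n z p z' where u: "u = add_pow R (2 * (n::int)) x \<oplus> z" "z \<in> ZZ"
      and v: "v = add_pow R (2 * (p::int)) x \<oplus> z'" "z' \<in> ZZ" using Lform by metis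
    have "st u v = add_pow R (2 * n * (2 * p)) c" unfolding u v c_def using prodf[OF x u(2) v(2)] by simp
    also have "\<dots> = add_pow R (4 * (n * p)) c" by (simp add: algebra_simps)
    finally have "st u v \<in> W" unfolding W_def by blast
    thus "st u v \<in> I" by (rule WI)
  qed
  have subL: "subbrace R L"
  proof (rule subbraceI[OF sgL])
    fix u v assume u: "u \<in> L" and v: "v \<in> L"
    show "st u v \<in> L" using ZL MM_r[OF LM[OF u]] v LC by auto
    show "st u (inv u) \<in> L" using ZL MM_r[OF LM[OF u]] u LC by auto
  qed
  have idL: "brace_ideal R L"
    unfolding brace_ideal_def brace_ideal_in_def
    using LC subL ZL MM_l MM_r LM by blast
  have grpL: "subgroup L R" using subL by (simp add: subbrace_def)
  have subI: "subbrace R I"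
  proof (rule subbraceI[OF sgI])
    fix u v assume u: "u \<in> I" and v: "v \<in> I"
    show "st u v \<in> I" using stI u v IL by auto
    have "inv u \<in> L" using subgroup.m_inv_closed[OF grpL] u IL by auto
    thus "st u (inv u) \<in> I" using stI u IL by auto
  qed
  have idLI: "brace_ideal_in R L I"
    unfolding brace_ideal_in_def using IL subI stI by blast
  have idI: "brace_ideal R I" using TT idL idLI unfolding T_brace_def by blast
  hence clI: "\<And>a i. a \<in> carrier R \<Longrightarrow> i \<in> I \<Longrightarrow> st a i \<in> I \<and> st i a \<in> I"
    unfolding brace_ideal_def brace_ideal_in_def by blast
  have Iform: "\<And>t. t \<in> I \<Longrightarrow> \<exists>n m. t = add_pow R (2 * (n::int)) x \<oplus> add_pow R (4 * (m::int)) c"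
    unfolding I_def sp_def W_def by blast
  define x2 where "x2 = add_pow R (2::int) x"
  have x2I: "x2 \<in> I"
  proof -
    have "x2 = add_pow R (2 * (1::int)) x \<oplus> add_pow R (4 * (0::int)) c" using xc x2_def by simp
    thus ?thesis unfolding I_def sp_def W_def by blast
  qed
  have "st x x2 = add_pow R (1 * 2::int) c"
    using prodf[OF x ZZ_zero ZZ_zero, of 1 2] xc unfolding x2_def c_def by simp
  hence "add_pow R (2::int) c \<in> I" using clI[OF xc x2I] by simp
  then obtain n m where nm: "add_pow R (2::int) c = add_pow R (2 * (n::int)) x \<oplus> add_pow R (4 * (m::int)) c"
    using Iform by blast
  have "add_pow R (2 * n) x = add_pow R (2::int) c \<oplus> \<ominus> add_pow R (4 * m) c"
    using solve_add[OF _ _ nm[symmetric]] xc cc by simp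
  also have "\<dots> \<in> ZZ" using ZZ_add[OF ZZ_pow[OF cZ] ZZ_neg[OF ZZ_pow[OF cZ]]] .
  finally have "2 * n = 0" using iso by blast
  hence "add_pow R (2::int) c = add_pow R (4 * m) c" using nm cc by simp
  hence "add_pow R (2::int) c \<oplus> \<ominus> add_pow R (4 * m) c = \<zero>" using cc by (simp add: r_neg)
  hence "add_pow R (2 - 4 * m) c = \<zero>" using add.int_pow_diff[OF cc, of 2 "4 * m"] by simp
  moreover have "2 - 4 * m \<noteq> 0" by presburger
  ultimately have c0: "c = \<zero>" using tf_int[OF cc] by blast
  have I0: "\<And>t. t \<in> I \<Longrightarrow> \<exists>n. t = add_pow R (2 * (n::int)) x"
  proof -
    fix t assume "t \<in> I"
    then obtain n m where "t = add_pow R (2 * (n::int)) x \<oplus> add_pow R (4 * (m::int)) c" using Iform by blast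
    hence "t = add_pow R (2 * (n::int)) x" using c0 xc by (simp add: add.int_pow_one)
    thus "\<exists>n. t = add_pow R (2 * (n::int)) x" by blast
  qed
  have kill: "\<And>y. y \<in> ZZ \<Longrightarrow> add_pow R (2::int) y \<in> I \<Longrightarrow> y = \<zero>"
  proof -
    fix y assume y: "y \<in> ZZ" and yI: "add_pow R (2::int) y \<in> I"
    then obtain n where n: "add_pow R (2::int) y = add_pow R (2 * (n::int)) x" using I0 by blast
    have "add_pow R (2::int) y \<in> ZZ" by (rule ZZ_pow[OF y])
    hence "add_pow R (2 * n) x \<in> ZZ" unfolding n .
    hence "2 * n = 0" using iso by blast
    hence "add_pow R (2::int) y = \<zero>" using n by simp
    thus "y = \<zero>" using tf_int[OF ZZ_carrier[OF y], of 2] by simp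
  qed
  { fix a assume a: "a \<in> carrier R"
    have "st a x2 = add_pow R (2::int) (st a x)" unfolding x2_def using st_pow_r[OF a xc] .
    hence "st a x = \<zero>" using kill[OF MM_l[OF x a]] clI[OF a x2I] by simp
    moreover have "st x2 a = add_pow R (2::int) (st x a)" unfolding x2_def using MM_pow[OF x a] by simp
    hence "st x a = \<zero>" using kill[OF MM_r[OF x a]] clI[OF a x2I] by simp
    ultimately have "st a x = \<zero> \<and> st x a = \<zero>" by simp }
  hence "x \<in> ZZ" using xc by (simp add: ZZ_def)
  thus False using nx by simp
qed


lemma series_Z:
  assumes RN: "right_series R N = {\<zero>}" and LK: "left_series R K = {\<zero>}" and jN: "j \<le> N"
  shows "right_series R j \<subseteq> ZZ"
  using jN
proof (induction j rule: inc_induct)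
  case base
  then show ?case using RN ZZ_zero by simp
next
  case (step j)
  have outerIH: "right_series R (Suc j) \<subseteq> ZZ" by (rule step.IH)
  have inner: "\<forall>y \<in> right_series R j \<inter> left_series R k. y \<in> ZZ" if kK: "k \<le> K" for k
    using kK
  proof (induction k rule: inc_induct)
    case base
    then show ?case using LK ZZ_zero by auto
  next
    case (step k)
    show ?case
    proof
      fix y assume y: "y \<in> right_series R j \<inter> left_series R k"
      have yc: "y \<in> carrier R" using y rs_carrier by auto
      { fix a assume a: "a \<in> carrier R"
        have "st y a \<in> ZZ" using rs_step[of y j a] y a outerIH by auto
        moreover have "st a y \<in> right_series R j"
          using good_rs[of j] y a unfolding goodS_def by blast
        hence "st a y \<in> ZZ" using ls_step[of y k a] y a yc step.IH by blast
        ultimately have "st y a \<in> ZZ \<and> st a y \<in> ZZ" by simp }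
      hence "y \<in> MM" using yc by (simp add: MM_def)
      thus "y \<in> ZZ" by (rule key)
    qed
  qed
  show ?case using inner[of 0] rs_carrier by auto
qed

end

theorem corollary2:
  fixes R :: "('a, 'm) ring_scheme"
  assumes "T_brace R"
    and "add_torsion_free R"
    and "smoktunowicz_nilpotent R"
  shows "\<forall>a\<in>carrier R. \<forall>b\<in>carrier R. bstar R a b = \<zero>\<^bsub>R\<^esub>"
proof -
  have br: "brace R" using assms(1) by (simp add: T_brace_def)
  interpret abelian_group R using br unfolding brace_def by (blast intro: comm_group_abelian_groupI)
  interpret group R using br by (simp add: brace_def)
  interpret brcT R
  proof (unfold_locales)
    show "\<And>a b c. a \<in> carrier R \<Longrightarrow> b \<in> carrier R \<Longrightarrow> c \<in> carrier R \<Longrightarrow>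
       a \<otimes>\<^bsub>R\<^esub> (b \<oplus>\<^bsub>R\<^esub> c) = (a \<otimes>\<^bsub>R\<^esub> b \<oplus>\<^bsub>R\<^esub> a \<otimes>\<^bsub>R\<^esub> c) \<ominus>\<^bsub>R\<^esub> a"
      using br by (simp add: brace_def)
    show "add_torsion_free R" by (rule assms(2))
    show "T_brace R" by (rule assms(1))
  qed
  obtain N K where RN: "right_series R N = {\<zero>\<^bsub>R\<^esub>}" and LK: "left_series R K = {\<zero>\<^bsub>R\<^esub>}"
    using assms(3) unfolding smoktunowicz_nilpotent_def by blast
  have "right_series R 0 \<subseteq> ZZ" using series_Z[OF RN LK, of 0] by simp
  hence "carrier R \<subseteq> ZZ" by simp
  thus ?thesis using ZZ_l by blast
qed

end
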